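(* Let $1\le k\le N-1$ satisfy $\phi^{k-1}-\phi^k>\phi^k-\phi^{k+1}$, let $F\in\tilde{\mathcal F}^k$, let $\mathcal U$ be an unlabeled atom of $\mathfrak A_k$, and let $\mathcal X$ be the vertex set of an arbitrary weakly connected component of the induced subgraph $F|_{\mathcal U}$. Then: (1) there is a forest $H\in\tilde{\mathcal F}^k$ such that the arcs leaving the vertices of $\mathcal X$ are the same in $F$ and $H$, and no arc of $H$ enters $\mathcal X$; (2) for every $G\in\tilde{\mathcal F}^k$ one has $\Upsilon^G_{\mathcal X}=\Upsilon^F_{\mathcal X}$; moreover, if the graph $F'=F^G_{\uparrow\mathcal X}$ is a forest (in particular, if no arc of $F$ enters $\mathcal X$), then $F'\in\tilde{\mathcal F}^k$; (3) if $G$ is any spanning forest of $V$ in which every vertex of $\mathcal X$ has an outgoing arc, then $\Upsilon^G_{\mathcal X}\ge\Upsilon^F_{\mathcal X}$; and if $\Upsilon^G_{\mathcal X}=\Upsilon^F_{\mathcal X}$, then there is $F'\in\tilde{\mathcal F}^k$ such that the arcs leaving the vertices of $\mathcal X$ in $G$ and in $F'$ coincide.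
   Context: $V$ is a digraph with vertex set $\mathcal N$, $|\mathcal N|=N$, real arc weights $v_{ij}$, having at least one spanning tree. An (entering) forest is a digraph in which every vertex has at most one outgoing arc and there is no directed cycle; its weakly connected components are trees, each with a root (the unique vertex with no outgoing arc). $\mathcal F^k$ is the set of spanning forests of $V$ with exactly $k$ trees. For a subgraph $G$ and $\mathcal S\subseteq\mathcal N$, $\Upsilon^G_{\mathcal S}=\sum v_{ij}$ over arcs $(i,j)$ of $G$ with $i\in\mathcal S$, and $\Upsilon^G=\Upsilon^G_{\mathcal N}$. $\phi^k=\min_{\mathcal F^k}\Upsilon^F$, $\phi^0=\infty$; $\tilde{\mathcal F}^k$ the forests in $\mathcal F^k$ of weight $\phi^k$. $\mathfrak A_k$ is the algebra of subsets of $\mathcal N$ generated by the vertex sets of trees of forests in $\tilde{\mathcal F}^k$; atoms are its minimal nonempty elements; an atom is unlabeled if it contains no root of any forest of $\tilde{\mathcal F}^k$. $F|_{\mathcal U}$ is the induced subgraph. An arc enters $\mathcal X$ if its head is in $\mathcal X$ and tail is not. $G^F_{\uparrow\mathcal S}$ is the graph obtained from $G$ by replacing the arcs leaving the vertices of $\mathcal S$ by the arcs leaving the same vertices in $F$ (so $F^G_{\uparrow\mathcal X}$ has the arcs of $G$ at vertices of $\mathcal X$ and those of $F$ elsewhere). *)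

theory Defs
  imports Complex_Main "HOL-Library.Extended_Real"
begin

text \<open>The digraph V: finite vertex set Nv, arc set E \<subseteq> Nv \<times> Nv, arc weights v i j.
  Subgraphs are represented by their arc sets (all vertices of Nv are kept).\<close>

definition is_digraph :: "'a set \<Rightarrow> ('a \<times> 'a) set \<Rightarrow> bool" where
  "is_digraph Nv E \<longleftrightarrow> finite Nv \<and> E \<subseteq> Nv \<times> Nv"

definition spanning_forest :: "('a \<times> 'a) set \<Rightarrow> ('a \<times> 'a) set \<Rightarrow> bool" where
  "spanning_forest E F \<longleftrightarrow> F \<subseteq> E \<and> (\<forall>i j j'. (i,j) \<in> F \<longrightarrow> (i,j') \<in> F \<longrightarrow> j = j') \<and> acyclic F"

definition roots :: "'a set \<Rightarrow> ('a \<times> 'a) set \<Rightarrow> 'a set" where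
  "roots Nv F = Nv - fst ` F"

definition wcomp :: "'a set \<Rightarrow> ('a \<times> 'a) set \<Rightarrow> 'a \<Rightarrow> 'a set" where
  "wcomp W G x = {y \<in> W. (x, y) \<in> (G \<union> G\<inverse>)\<^sup>*}"

text \<open>\<F>^k: spanning forests with exactly k trees (= k roots).\<close>
definition forests_k :: "'a set \<Rightarrow> ('a \<times> 'a) set \<Rightarrow> nat \<Rightarrow> ('a \<times> 'a) set set" where
  "forests_k Nv E k = {F. spanning_forest E F \<and> card (roots Nv F) = k}"

definition Ups :: "('a \<Rightarrow> 'a \<Rightarrow> real) \<Rightarrow> ('a \<times> 'a) set \<Rightarrow> 'a set \<Rightarrow> real" where
  "Ups v G S = (\<Sum>(i,j)\<in>{a \<in> G. fst a \<in> S}. v i j)"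

definition Ups_all :: "('a \<Rightarrow> 'a \<Rightarrow> real) \<Rightarrow> ('a \<times> 'a) set \<Rightarrow> real" where
  "Ups_all v G = (\<Sum>(i,j)\<in>G. v i j)"

definition phi :: "'a set \<Rightarrow> ('a \<times> 'a) set \<Rightarrow> ('a \<Rightarrow> 'a \<Rightarrow> real) \<Rightarrow> nat \<Rightarrow> ereal" where
  "phi Nv E v k = (if k = 0 then \<infinity> else ereal (Min (Ups_all v ` forests_k Nv E k)))"

definition min_forests :: "'a set \<Rightarrow> ('a \<times> 'a) set \<Rightarrow> ('a \<Rightarrow> 'a \<Rightarrow> real) \<Rightarrow> nat \<Rightarrow> ('a \<times> 'a) set set" where
  "min_forests Nv E v k = {F \<in> forests_k Nv E k. ereal (Ups_all v F) = phi Nv E v k}"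

inductive_set gen_algebra :: "'a set \<Rightarrow> 'a set set \<Rightarrow> 'a set set" for Nv Gs where
  gen: "A \<in> Gs \<Longrightarrow> A \<in> gen_algebra Nv Gs"
| empty: "{} \<in> gen_algebra Nv Gs"
| compl: "A \<in> gen_algebra Nv Gs \<Longrightarrow> Nv - A \<in> gen_algebra Nv Gs"
| union: "A \<in> gen_algebra Nv Gs \<Longrightarrow> B \<in> gen_algebra Nv Gs \<Longrightarrow> A \<union> B \<in> gen_algebra Nv Gs"

definition alg_k :: "'a set \<Rightarrow> ('a \<times> 'a) set \<Rightarrow> ('a \<Rightarrow> 'a \<Rightarrow> real) \<Rightarrow> nat \<Rightarrow> 'a set set" where
  "alg_k Nv E v k = gen_algebra Nv {wcomp Nv F x | F x. F \<in> min_forests Nv E v k \<and> x \<in> Nv}"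

definition is_atom :: "'a set set \<Rightarrow> 'a set \<Rightarrow> bool" where
  "is_atom Alg U \<longleftrightarrow> U \<in> Alg \<and> U \<noteq> {} \<and> (\<forall>W \<in> Alg. W \<subseteq> U \<longrightarrow> W = {} \<or> W = U)"

definition unlabeled_atom :: "'a set \<Rightarrow> ('a \<times> 'a) set \<Rightarrow> ('a \<Rightarrow> 'a \<Rightarrow> real) \<Rightarrow> nat \<Rightarrow> 'a set \<Rightarrow> bool" where
  "unlabeled_atom Nv E v k U \<longleftrightarrow> is_atom (alg_k Nv E v k) U \<and>
     (\<forall>H \<in> min_forests Nv E v k. U \<inter> roots Nv H = {})"

definition arcs_from :: "('a \<times> 'a) set \<Rightarrow> 'a set \<Rightarrow> ('a \<times> 'a) set" where
  "arcs_from G S = {a \<in> G. fst a \<in> S}"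

definition enters :: "('a \<times> 'a) set \<Rightarrow> 'a set \<Rightarrow> bool" where
  "enters G X \<longleftrightarrow> (\<exists>i j. (i,j) \<in> G \<and> j \<in> X \<and> i \<notin> X)"

text \<open>G^F_{\<up>S}: replace arcs of G leaving S by those of F leaving S.\<close>
definition replace_at :: "('a \<times> 'a) set \<Rightarrow> ('a \<times> 'a) set \<Rightarrow> 'a set \<Rightarrow> ('a \<times> 'a) set" where
  "replace_at G F S = arcs_from F S \<union> {a \<in> G. fst a \<notin> S}"

end

theory Submission
  imports Defs
begin


definition functional :: "('a \<times> 'a) set \<Rightarrow> bool" where
  "functional H \<longleftrightarrow> (\<forall>i j j'. (i,j) \<in> H \<longrightarrow> (i,j') \<in> H \<longrightarrow> j = j')"

lemma sf_iff: "spanning_forest E H \<longleftrightarrow> H \<subseteq> E \<and> functional H \<and> acyclic H"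
  unfolding spanning_forest_def functional_def by blast

lemma rt_ex:
  assumes "finite H" "acyclic H"
  shows "\<exists>r. (z,r) \<in> H\<^sup>* \<and> r \<notin> fst ` H"
proof -
  have wf: "wf (H\<inverse>)" using finite_acyclic_wf_converse[OF assms] .
  show ?thesis
  proof (induction z rule: wf_induct[OF wf])
    case (1 z)
    show ?case
    proof (cases "z \<in> fst ` H")
      case False thus ?thesis by blast
    next
      case True
      then obtain y where zy: "(z,y) \<in> H" by force
      hence "(y,z) \<in> H\<inverse>" by simp
      from 1[rule_format, OF this] obtain r where "(y,r) \<in> H\<^sup>*" "r \<notin> fst ` H" by blast
      with zy show ?thesis by (meson converse_rtrancl_into_rtrancl)
    qed
  qed
qed

lemma rt_unique:
  assumes f: "functional H" and a: "(z,r1) \<in> H\<^sup>*" and r1: "r1 \<notin> fst ` H"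
  shows "(z,r2) \<in> H\<^sup>* \<Longrightarrow> r2 \<notin> fst ` H \<Longrightarrow> r1 = r2"
  using a
proof (induction arbitrary: rule: converse_rtrancl_induct)
  case base
  then show ?case using r1 by (auto elim: converse_rtranclE simp: image_iff) (metis converse_rtranclE fst_conv)
next
  case (step z y)
  from step.prems(1) show ?case
  proof (rule converse_rtranclE)
    assume "z = r2" thus ?thesis using step.hyps(1) step.prems(2) by force
  next
    fix y' assume h: "(z,y') \<in> H" "(y',r2) \<in> H\<^sup>*"
    with f step.hyps(1) have "y' = y" unfolding functional_def by blast
    with h step.IH step.prems show ?thesis by blast
  qed
qed

definition rt :: "('a \<times> 'a) set \<Rightarrow> 'a \<Rightarrow> 'a" where
  "rt H z = (SOME r. (z,r) \<in> H\<^sup>* \<and> r \<notin> fst ` H)"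

lemma rt_props:
  assumes "finite H" "acyclic H"
  shows "(z, rt H z) \<in> H\<^sup>*" "rt H z \<notin> fst ` H"
  using someI_ex[OF rt_ex[OF assms, of z]] unfolding rt_def by auto

lemma rt_eqI:
  assumes "finite H" "acyclic H" "functional H" "(z,r) \<in> H\<^sup>*" "r \<notin> fst ` H"
  shows "rt H z = r"
  using rt_unique[OF assms(3) rt_props[OF assms(1,2)] assms(4,5)] .

lemma rt_star:
  assumes "finite H" "acyclic H" "functional H" "(a,b) \<in> H\<^sup>*"
  shows "rt H a = rt H b"
proof -
  have "(a, rt H b) \<in> H\<^sup>*" using assms(4) rt_props(1)[OF assms(1,2)] by (meson rtrancl_trans)
  thus ?thesis using rt_eqI[OF assms(1-3)] rt_props(2)[OF assms(1,2)] by blast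
qed

lemma rt_conn:
  assumes "finite H" "acyclic H" "functional H" "(a,b) \<in> (H \<union> H\<inverse>)\<^sup>*"
  shows "rt H a = rt H b"
  using assms(4)
proof (induction rule: rtrancl_induct)
  case base then show ?case by simp
next
  case (step y z)
  then show ?case using rt_star[OF assms(1-3)] by (metis UnE converse_iff r_into_rtrancl)
qed

lemma conn_rt:
  assumes "finite H" "acyclic H" "rt H a = rt H b"
  shows "(a,b) \<in> (H \<union> H\<inverse>)\<^sup>*"
proof -
  have 1: "(a, rt H a) \<in> (H \<union> H\<inverse>)\<^sup>*" using rt_props(1)[OF assms(1,2)] rtrancl_mono[of H "H \<union> H\<inverse>"] by blast
  have "(b, rt H b) \<in> H\<^sup>*" using rt_props(1)[OF assms(1,2)] .
  hence "(rt H b, b) \<in> (H\<inverse>)\<^sup>*" by (simp add: rtrancl_converse)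
  hence 2: "(rt H b, b) \<in> (H \<union> H\<inverse>)\<^sup>*" using rtrancl_mono[of "H\<inverse>" "H \<union> H\<inverse>"] by blast
  show ?thesis using 1 2 assms(3) by (metis rtrancl_trans)
qed

lemma acyc_split:
  assumes "acyclic (R \<inter> C \<times> C)" "acyclic (R \<inter> (-C) \<times> (-C))" "\<forall>(a,b)\<in>R. a \<notin> C \<longrightarrow> b \<notin> C"
  shows "acyclic R"
proof -
  have key: "(b \<in> C \<longrightarrow> (a,b) \<in> (R \<inter> C \<times> C)\<^sup>+) \<and> (a \<notin> C \<longrightarrow> b \<notin> C \<and> (a,b) \<in> (R \<inter> (-C) \<times> (-C))\<^sup>+)"
    if "(a,b) \<in> R\<^sup>+" for a b
    using that
  proof (induction rule: trancl_induct)
    case (base y) thus ?case using assms(3) by auto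
  next
    case (step y z)
    then show ?case using assms(3) by (auto intro: trancl_into_trancl)
  qed
  show ?thesis unfolding acyclic_def
  proof
    fix x show "(x,x) \<notin> R\<^sup>+"
    proof
      assume "(x,x) \<in> R\<^sup>+"
      from key[OF this] assms(1,2) show False unfolding acyclic_def by (cases "x \<in> C") auto
    qed
  qed
qed

lemma acyc_a:
  assumes "acyclic F" "acyclic G" "\<forall>(a,b)\<in>F. a \<notin> S \<longrightarrow> b \<notin> S"
  shows "acyclic (replace_at F G S)"
proof (rule acyc_split[where C=S])
  show "acyclic (replace_at F G S \<inter> S \<times> S)"
    by (rule acyclic_subset[OF assms(2)]) (auto simp: replace_at_def arcs_from_def)
  show "acyclic (replace_at F G S \<inter> (-S) \<times> (-S))"
    by (rule acyclic_subset[OF assms(1)]) (auto simp: replace_at_def arcs_from_def)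
qed (use assms(3) in \<open>auto simp: replace_at_def arcs_from_def\<close>)

lemma acyc_b:
  assumes "acyclic F" "acyclic G" "\<forall>(a,b)\<in>G. a \<in> S \<longrightarrow> b \<in> S"
  shows "acyclic (replace_at F G S)"
proof (rule acyc_split[where C="-S"])
  show "acyclic (replace_at F G S \<inter> (-S) \<times> (-S))"
    by (rule acyclic_subset[OF assms(1)]) (auto simp: replace_at_def arcs_from_def)
  show "acyclic (replace_at F G S \<inter> (- (-S)) \<times> (- (-S)))"
    by (rule acyclic_subset[OF assms(2)]) (auto simp: replace_at_def arcs_from_def)
qed (use assms(3) in \<open>auto simp: replace_at_def arcs_from_def\<close>)




definition Out :: "('a \<Rightarrow> 'a \<Rightarrow> real) \<Rightarrow> ('a \<times> 'a) set \<Rightarrow> 'a set \<Rightarrow> real" where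
  "Out v G S = (\<Sum>(i,j)\<in>{a \<in> G. fst a \<notin> S}. v i j)"

lemma Ups_split: "finite F \<Longrightarrow> Ups_all v F = Ups v F S + Out v F S"
proof -
  assume f: "finite F"
  have "F = {a \<in> F. fst a \<in> S} \<union> {a \<in> F. fst a \<notin> S}" by blast
  hence "Ups_all v F = (\<Sum>(i,j)\<in>{a \<in> F. fst a \<in> S} \<union> {a \<in> F. fst a \<notin> S}. v i j)"
    unfolding Ups_all_def by simp
  also have "\<dots> = Ups v F S + Out v F S" unfolding Ups_def Out_def
    by (rule sum.union_disjoint) (use f in auto)
  finally show ?thesis .
qed

lemma Ups_repl: "finite F \<Longrightarrow> finite G \<Longrightarrow> Ups_all v (replace_at F G S) = Ups v G S + Out v F S"
proof -
  assume f: "finite F" "finite G"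
  have "Ups_all v (replace_at F G S) = (\<Sum>(i,j)\<in>{a \<in> G. fst a \<in> S} \<union> {a \<in> F. fst a \<notin> S}. v i j)"
    unfolding Ups_all_def replace_at_def arcs_from_def by simp
  also have "\<dots> = Ups v G S + Out v F S" unfolding Ups_def Out_def
    by (rule sum.union_disjoint) (use f in auto)
  finally show ?thesis .
qed

lemma Ups_arcs: "arcs_from F S = arcs_from G S \<Longrightarrow> Ups v F S = Ups v G S"
  unfolding Ups_def arcs_from_def by simp

lemma fst_repl: "x \<in> fst ` (replace_at F G S) \<longleftrightarrow> (x \<in> S \<and> x \<in> fst ` G) \<or> (x \<notin> S \<and> x \<in> fst ` F)"
  unfolding replace_at_def arcs_from_def by force

lemma roots_repl: "roots Nv (replace_at F G S) = (roots Nv F - S) \<union> (roots Nv G \<inter> S)"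
  unfolding roots_def using fst_repl[of _ F G S] by blast

lemma roots_repl_same: "S \<subseteq> fst ` F \<Longrightarrow> S \<subseteq> fst ` G \<Longrightarrow> roots Nv (replace_at F G S) = roots Nv F"
  by (simp only: roots_repl) (auto simp: roots_def)

lemma sf_repl: "spanning_forest E F \<Longrightarrow> spanning_forest E G \<Longrightarrow> acyclic (replace_at F G S)
   \<Longrightarrow> spanning_forest E (replace_at F G S)"
  unfolding spanning_forest_def
proof (intro conjI allI impI)
  assume a: "F \<subseteq> E \<and> (\<forall>i j j'. (i, j) \<in> F \<longrightarrow> (i, j') \<in> F \<longrightarrow> j = j') \<and> acyclic F"
     "G \<subseteq> E \<and> (\<forall>i j j'. (i, j) \<in> G \<longrightarrow> (i, j') \<in> G \<longrightarrow> j = j') \<and> acyclic G"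
     "acyclic (replace_at F G S)"
  show "replace_at F G S \<subseteq> E" using a(1,2) unfolding replace_at_def arcs_from_def by auto
  show "acyclic (replace_at F G S)" by fact
  fix i j j' assume "(i, j) \<in> replace_at F G S" "(i, j') \<in> replace_at F G S"
  thus "j = j'" using a(1,2) unfolding replace_at_def arcs_from_def by auto
qed

locale ctx =
  fixes Nv :: "'a set" and E :: "('a \<times> 'a) set" and v :: "'a \<Rightarrow> 'a \<Rightarrow> real" and k :: nat
  assumes dg: "is_digraph Nv E" and k1: "1 \<le> k" and kN: "k \<le> card Nv - 1"
    and gap: "phi Nv E v (k - 1) - phi Nv E v k > phi Nv E v k - phi Nv E v (k + 1)"
begin

abbreviation "MF \<equiv> min_forests Nv E v k"

lemma finNv: "finite Nv" and Esub: "E \<subseteq> Nv \<times> Nv" using dg unfolding is_digraph_def by auto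

lemma finE: "finite E" using finite_subset[OF Esub] finNv by blast

lemma Nv_ne: "Nv \<noteq> {}" using k1 kN by auto

lemma sf_fin: "spanning_forest E H \<Longrightarrow> finite H"
  unfolding spanning_forest_def using finE finite_subset by blast

lemma sf_props: assumes "spanning_forest E H"
  shows "finite H" "acyclic H" "functional H" "H \<subseteq> Nv \<times> Nv"
  using sf_fin[OF assms] assms Esub unfolding sf_iff by auto

lemma star_Nv: assumes "H \<subseteq> Nv \<times> Nv" "(z,r) \<in> H\<^sup>*" "z \<in> Nv" shows "r \<in> Nv"
  using assms(2,3) by (induction rule: rtrancl_induct) (use assms(1) in auto)

lemma rt_root: assumes "spanning_forest E H" "z \<in> Nv" shows "rt H z \<in> roots Nv H"
  using rt_props[OF sf_props(1,2)[OF assms(1)]] star_Nv[OF sf_props(4)[OF assms(1)] _ assms(2)]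
  unfolding roots_def by blast

lemma rt_of_root: assumes "spanning_forest E H" "r \<in> roots Nv H" shows "rt H r = r"
  using rt_eqI[OF sf_props(1-3)[OF assms(1)], of r r] assms(2) unfolding roots_def by auto

lemma forests0: "forests_k Nv E 0 = {}"
proof -
  { fix H assume "spanning_forest E H" "card (roots Nv H) = 0"
    moreover obtain z where "z \<in> Nv" using Nv_ne by blast
    ultimately have False using rt_root[of H z] finNv unfolding roots_def by auto }
  thus ?thesis unfolding forests_k_def by blast
qed

lemma fin_forests: "finite (forests_k Nv E j)"
proof -
  have "forests_k Nv E j \<subseteq> Pow E" unfolding forests_k_def spanning_forest_def by auto
  thus ?thesis using finE finite_subset by blast
qed

lemma phi_le: assumes "j \<noteq> 0" "P \<in> forests_k Nv E j" shows "phi Nv E v j \<le> ereal (Ups_all v P)"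
  using assms fin_forests unfolding phi_def by auto

lemma MF_phi: "F \<in> MF \<Longrightarrow> phi Nv E v k = ereal (Ups_all v F)"
  unfolding min_forests_def by auto

lemma MF_sf: "F \<in> MF \<Longrightarrow> spanning_forest E F" and MF_card: "F \<in> MF \<Longrightarrow> card (roots Nv F) = k"
  unfolding min_forests_def forests_k_def by auto

lemma MF_fin: "finite MF"
  using fin_forests[of k] unfolding min_forests_def by auto

lemma MF_ge: assumes "F \<in> MF" "spanning_forest E P" "card (roots Nv P) = k"
  shows "Ups_all v F \<le> Ups_all v P"
  using phi_le[of k P] assms k1 MF_phi[OF assms(1)] unfolding forests_k_def by auto

lemma MF_I: assumes "F \<in> MF" "spanning_forest E P" "card (roots Nv P) = k" "Ups_all v P \<le> Ups_all v F"
  shows "P \<in> MF"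
  using MF_ge[OF assms(1-3)] assms MF_phi[OF assms(1)] unfolding min_forests_def forests_k_def by auto

lemma no_split:
  assumes A: "spanning_forest E A" "card (roots Nv A) = k + 1"
    and B: "spanning_forest E B" "card (roots Nv B) = k - 1"
    and F: "F \<in> MF" and s: "Ups_all v A + Ups_all v B = 2 * Ups_all v F"
  shows False
proof (cases "k = 1")
  case True thus False using B forests0 unfolding forests_k_def by auto
next
  case False
  hence "k - 1 \<noteq> 0" using k1 by auto
  hence pB: "phi Nv E v (k - 1) \<le> ereal (Ups_all v B)" using phi_le[of "k-1" B] B unfolding forests_k_def by blast
  have pA: "phi Nv E v (k + 1) \<le> ereal (Ups_all v A)" using phi_le[of "k+1" A] A by (simp add: forests_k_def)
  have pF: "phi Nv E v k = ereal (Ups_all v F)" using MF_phi[OF F] .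
  have "k - 1 \<noteq> 0" by fact
  then obtain a where a: "phi Nv E v (k - 1) = ereal a" unfolding phi_def by auto
  obtain c where c: "phi Nv E v (k + 1) = ereal c" unfolding phi_def by auto
  from gap a c pF have "a - Ups_all v F > Ups_all v F - c" by simp
  moreover have "a \<le> Ups_all v B" "c \<le> Ups_all v A" using pA pB a c by auto
  ultimately show False using s by linarith
qed

end



definition closed :: "'a set \<Rightarrow> ('a \<times> 'a) set \<Rightarrow> bool" where
  "closed S H \<longleftrightarrow> (\<forall>(a,b)\<in>H. a \<in> S \<longleftrightarrow> b \<in> S)"

lemma closed_star: assumes "closed S H" "(a,b) \<in> H\<^sup>*" shows "a \<in> S \<longleftrightarrow> b \<in> S"
  using assms(2) by (induction rule: rtrancl_induct) (use assms(1) in \<open>auto simp: closed_def\<close>)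

lemma closed_compl: "closed S H \<Longrightarrow> closed (-S) H"
  unfolding closed_def by auto

lemma weights_sum: "finite F \<Longrightarrow> finite H \<Longrightarrow>
  Ups_all v (replace_at F H S) + Ups_all v (replace_at H F S) = Ups_all v F + Ups_all v H"
  using Ups_repl[of F H v S] Ups_repl[of H F v S] Ups_split[of F v S] Ups_split[of H v S] by simp

lemma card_repl: assumes "finite (roots Nv F)" "finite (roots Nv G)"
  shows "card (roots Nv (replace_at F G S)) = card (roots Nv F - S) + card (roots Nv G \<inter> S)"
  unfolding roots_repl by (rule card_Un_disjoint) (use assms in auto)

lemma card_split: "finite A \<Longrightarrow> card A = card (A - S) + card (A \<inter> S)"
  by (metis Int_Diff_Un Int_Diff_disjoint card_Un_disjoint finite_Diff finite_Int add.commute)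

context ctx begin

lemma fin_roots: "finite (roots Nv F)" unfolding roots_def using finNv by auto

lemma wcomp_closed: assumes "spanning_forest E H" shows "closed (wcomp Nv H z) H"
  unfolding closed_def
proof (clarify)
  fix a b assume ab: "(a,b) \<in> H"
  hence Nv: "a \<in> Nv" "b \<in> Nv" using sf_props(4)[OF assms] by auto
  have 1: "(a,b) \<in> (H \<union> H\<inverse>)" "(b,a) \<in> (H \<union> H\<inverse>)" using ab by auto
  show "(a \<in> wcomp Nv H z) = (b \<in> wcomp Nv H z)"
  proof
    assume "a \<in> wcomp Nv H z"
    hence "(z,a) \<in> (H \<union> H\<inverse>)\<^sup>*" unfolding wcomp_def by simp
    hence "(z,b) \<in> (H \<union> H\<inverse>)\<^sup>*" using 1(1) by (rule rtrancl_into_rtrancl)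
    thus "b \<in> wcomp Nv H z" unfolding wcomp_def using Nv by simp
  next
    assume "b \<in> wcomp Nv H z"
    hence "(z,b) \<in> (H \<union> H\<inverse>)\<^sup>*" unfolding wcomp_def by simp
    hence "(z,a) \<in> (H \<union> H\<inverse>)\<^sup>*" using 1(2) by (rule rtrancl_into_rtrancl)
    thus "a \<in> wcomp Nv H z" unfolding wcomp_def using Nv by simp
  qed
qed

lemma wcomp_rt: assumes "spanning_forest E H" shows "wcomp Nv H z = {w \<in> Nv. rt H w = rt H z}"
proof -
  have "(z,w) \<in> (H \<union> H\<inverse>)\<^sup>* \<longleftrightarrow> rt H w = rt H z" for w
  proof
    assume "(z,w) \<in> (H \<union> H\<inverse>)\<^sup>*"
    from rt_conn[OF sf_props(1-3)[OF assms] this] show "rt H w = rt H z" by simp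
  next
    assume "rt H w = rt H z"
    hence "rt H z = rt H w" by simp
    from conn_rt[OF sf_props(1,2)[OF assms] this] show "(z,w) \<in> (H \<union> H\<inverse>)\<^sup>*" .
  qed
  thus ?thesis unfolding wcomp_def by blast
qed

lemma exch_forests: assumes "spanning_forest E F" "spanning_forest E H" "closed S H"
  shows "spanning_forest E (replace_at F H S)" "spanning_forest E (replace_at H F S)"
proof -
  show "spanning_forest E (replace_at F H S)"
    by (rule sf_repl[OF assms(1,2)], rule acyc_b[OF sf_props(2)[OF assms(1)] sf_props(2)[OF assms(2)]])
       (use assms(3) in \<open>auto simp: closed_def\<close>)
  show "spanning_forest E (replace_at H F S)"
    by (rule sf_repl[OF assms(2,1)], rule acyc_a[OF sf_props(2)[OF assms(2)] sf_props(2)[OF assms(1)]])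
       (use assms(3) in \<open>auto simp: closed_def\<close>)
qed

lemma atleast: assumes F: "F \<in> MF" and H: "H \<in> MF" and r': "r' \<in> roots Nv H"
  shows "\<exists>r\<in>roots Nv F. rt H r = r'"
proof (rule ccontr)
  assume no: "\<not> ?thesis"
  have sF: "spanning_forest E F" and sH: "spanning_forest E H" using F H by (auto intro: MF_sf)
  define T where "T = wcomp Nv H r'"
  have Tc: "closed T H" unfolding T_def by (rule wcomp_closed[OF sH])
  have r'Nv: "r' \<in> Nv" using r' unfolding roots_def by auto
  have rtr': "rt H r' = r'" by (rule rt_of_root[OF sH r'])
  have T: "T = {w \<in> Nv. rt H w = r'}" unfolding T_def wcomp_rt[OF sH] rtr' ..
  have rFT: "roots Nv F \<inter> T = {}" using no T by auto
  have rHT: "roots Nv H \<inter> T = {r'}" using T r' rt_of_root[OF sH] r'Nv rtr' by auto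
  have r'F: "r' \<notin> roots Nv F" using rFT T r'Nv rtr' by auto
  have cA: "card (roots Nv (replace_at F H T)) = k + 1"
    using card_repl[OF fin_roots fin_roots, of F H T] rFT rHT card_split[OF fin_roots, of F T] MF_card[OF F] by simp
  have cB: "card (roots Nv (replace_at H F T)) = k - 1"
  proof -
    have "card (roots Nv (replace_at H F T)) = card (roots Nv H - T)"
      using card_repl[OF fin_roots fin_roots, of H F T] rFT by (simp add: Int_commute)
    moreover have "card (roots Nv H) = card (roots Nv H - T) + 1"
      using card_split[OF fin_roots, of H T] rHT by simp
    ultimately show ?thesis using MF_card[OF H] by simp
  qed
  have wH: "Ups_all v H = Ups_all v F" using MF_phi[OF F] MF_phi[OF H] by simp
  show False
    by (rule no_split[OF exch_forests(1)[OF sF sH Tc] cA exch_forests(2)[OF sF sH Tc] cB F])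
       (use weights_sum[OF sf_fin[OF sF] sf_fin[OF sH], of v T] wH in simp)
qed

lemma rtbij: assumes F: "F \<in> MF" and H: "H \<in> MF"
  shows "inj_on (rt H) (roots Nv F)" "rt H ` roots Nv F = roots Nv H"
proof -
  have sH: "spanning_forest E H" using H by (auto intro: MF_sf)
  show im: "rt H ` roots Nv F = roots Nv H"
  proof
    show "rt H ` roots Nv F \<subseteq> roots Nv H" using rt_root[OF sH] unfolding roots_def by auto
    show "roots Nv H \<subseteq> rt H ` roots Nv F" using atleast[OF F H] by force
  qed
  show "inj_on (rt H) (roots Nv F)"
    by (rule eq_card_imp_inj_on[OF fin_roots]) (use im MF_card[OF F] MF_card[OF H] in simp)
qed

lemma count: assumes F: "F \<in> MF" and H: "H \<in> MF" and S: "closed S H"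
  shows "card (roots Nv F \<inter> S) = card (roots Nv H \<inter> S)"
proof -
  have sH: "spanning_forest E H" using H by (auto intro: MF_sf)
  have "rt H ` (roots Nv F \<inter> S) = roots Nv H \<inter> S"
  proof
    have "rt H r \<in> roots Nv H \<inter> S" if r: "r \<in> roots Nv F" "r \<in> S" for r
    proof
      show "rt H r \<in> roots Nv H" using rtbij(2)[OF F H] r by auto
      show "rt H r \<in> S" using closed_star[OF S rt_props(1)[OF sf_props(1,2)[OF sH], of r]] r by simp
    qed
    thus "rt H ` (roots Nv F \<inter> S) \<subseteq> roots Nv H \<inter> S" by blast
    show "roots Nv H \<inter> S \<subseteq> rt H ` (roots Nv F \<inter> S)"
    proof
      fix r' assume "r' \<in> roots Nv H \<inter> S"
      hence r': "r' \<in> roots Nv H" "r' \<in> S" by auto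
      then obtain r where r: "r \<in> roots Nv F" "rt H r = r'" using rtbij(2)[OF F H] by force
      have "r \<in> S" using closed_star[OF S rt_props(1)[OF sf_props(1,2)[OF sH], of r]] r r' by simp
      thus "r' \<in> rt H ` (roots Nv F \<inter> S)" using r by auto
    qed
  qed
  moreover have "inj_on (rt H) (roots Nv F \<inter> S)" using rtbij(1)[OF F H] inj_on_subset by blast
  ultimately show ?thesis using card_image by metis
qed

lemma exch: assumes F: "F \<in> MF" and H: "H \<in> MF" and S: "closed S H"
  shows "replace_at F H S \<in> MF"
proof -
  have sF: "spanning_forest E F" and sH: "spanning_forest E H" using F H by (auto intro: MF_sf)
  have c: "card (roots Nv F \<inter> S) = card (roots Nv H \<inter> S)" by (rule count[OF F H S])
  have cA: "card (roots Nv (replace_at F H S)) = k"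
    using card_repl[OF fin_roots fin_roots, of F H S] c card_split[OF fin_roots, of F S] MF_card[OF F] by simp
  have cB: "card (roots Nv (replace_at H F S)) = k"
    using card_repl[OF fin_roots fin_roots, of H F S] c card_split[OF fin_roots, of H S] MF_card[OF H] by simp
  have wH: "Ups_all v H = Ups_all v F" using MF_phi[OF F] MF_phi[OF H] by simp
  have geA: "Ups_all v F \<le> Ups_all v (replace_at F H S)" by (rule MF_ge[OF F exch_forests(1)[OF sF sH S] cA])
  have geB: "Ups_all v H \<le> Ups_all v (replace_at H F S)" by (rule MF_ge[OF H exch_forests(2)[OF sF sH S] cB])
  show ?thesis
    by (rule MF_I[OF F exch_forests(1)[OF sF sH S] cA])
       (use weights_sum[OF sf_fin[OF sF] sf_fin[OF sH], of v S] wH geA geB in simp)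
qed

end



lemma alg_sub: "A \<in> gen_algebra Nv Gs \<Longrightarrow> \<forall>g\<in>Gs. g \<subseteq> Nv \<Longrightarrow> A \<subseteq> Nv"
  by (induction rule: gen_algebra.induct) auto

lemma alg_resp: "A \<in> gen_algebra Nv Gs \<Longrightarrow> y \<in> Nv \<Longrightarrow> z \<in> Nv \<Longrightarrow> \<forall>g\<in>Gs. (y \<in> g \<longleftrightarrow> z \<in> g)
   \<Longrightarrow> (y \<in> A \<longleftrightarrow> z \<in> A)"
  by (induction rule: gen_algebra.induct) auto

lemma alg_int: assumes "A \<in> gen_algebra Nv Gs" "B \<in> gen_algebra Nv Gs" "A \<subseteq> Nv"
  shows "A \<inter> B \<in> gen_algebra Nv Gs"
proof -
  have "A \<inter> B = Nv - ((Nv - A) \<union> (Nv - B))" using assms(3) by blast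
  thus ?thesis using assms by (metis gen_algebra.compl gen_algebra.union)
qed

lemma arcs_from_sub: "arcs_from P U = arcs_from F U \<Longrightarrow> X \<subseteq> U \<Longrightarrow> arcs_from P X = arcs_from F X"
  unfolding arcs_from_def by blast

context ctx begin

abbreviation "Gs \<equiv> {wcomp Nv F x | F x. F \<in> MF \<and> x \<in> Nv}"

lemma Gs_sub: "\<forall>g\<in>Gs. g \<subseteq> Nv" unfolding wcomp_def by auto

context
  fixes U y
  assumes U: "unlabeled_atom Nv E v k U" and y: "y \<in> U"
begin

lemma U_alg: "U \<in> alg_k Nv E v k" using U unfolding unlabeled_atom_def is_atom_def by auto

lemma U_Nv: "U \<subseteq> Nv" using alg_sub[OF U_alg[unfolded alg_k_def] Gs_sub] .

lemma yNv: "y \<in> Nv" using U_Nv y by auto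

lemma U_dom: "H \<in> MF \<Longrightarrow> U \<subseteq> fst ` H"
  using U U_Nv unfolding unlabeled_atom_def roots_def by blast

lemma U_in: assumes H: "H \<in> MF" shows "U \<subseteq> wcomp Nv H y"
proof -
  have g: "wcomp Nv H y \<in> alg_k Nv E v k" unfolding alg_k_def using H yNv by (blast intro: gen_algebra.gen)
  have W: "U \<inter> wcomp Nv H y \<in> alg_k Nv E v k" using alg_int[OF U_alg[unfolded alg_k_def] g[unfolded alg_k_def] U_Nv]
    unfolding alg_k_def .
  have "y \<in> wcomp Nv H y" unfolding wcomp_def using yNv by simp
  hence "U \<inter> wcomp Nv H y \<noteq> {}" using y by blast
  hence "U \<inter> wcomp Nv H y = U" using U W unfolding unlabeled_atom_def is_atom_def by blast
  thus ?thesis by blast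
qed

lemma D_sub: assumes z: "z \<in> Nv" and all: "\<forall>H\<in>MF. z \<in> wcomp Nv H y" shows "z \<in> U"
proof -
  have "\<forall>g\<in>Gs. (y \<in> g \<longleftrightarrow> z \<in> g)"
  proof clarify
    fix H x assume H: "H \<in> MF" and "x \<in> Nv"
    have sH: "spanning_forest E H" using H by (rule MF_sf)
    have "rt H z = rt H y" using all H wcomp_rt[OF sH, of y] by auto
    thus "(y \<in> wcomp Nv H x) = (z \<in> wcomp Nv H x)" using wcomp_rt[OF sH, of x] z yNv by auto
  qed
  from alg_resp[OF U_alg[unfolded alg_k_def] yNv z this] y show ?thesis by simp
qed

definition DD :: "('a \<times> 'a) set set \<Rightarrow> 'a set" where
  "DD M = {z \<in> Nv. \<forall>H\<in>M. z \<in> wcomp Nv H y}"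

lemma iter: assumes "finite M" "M \<subseteq> MF" "F \<in> MF"
  shows "\<exists>P\<in>MF. (\<forall>(a,b)\<in>P. a \<in> DD M \<longrightarrow> (a,b) \<in> F) \<and> (\<forall>(a,b)\<in>P. a \<notin> DD M \<longrightarrow> b \<notin> DD M)"
  using assms(1,2)
proof (induction M rule: finite_induct)
  case empty
  have "\<forall>(a,b)\<in>F. a \<in> Nv" using sf_props(4)[OF MF_sf[OF assms(3)]] by auto
  thus ?case using assms(3) unfolding DD_def by auto
next
  case (insert H M)
  then obtain P where P: "P \<in> MF" "\<forall>(a,b)\<in>P. a \<in> DD M \<longrightarrow> (a,b) \<in> F" "\<forall>(a,b)\<in>P. a \<notin> DD M \<longrightarrow> b \<notin> DD M"
    by auto
  have H: "H \<in> MF" using insert by auto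
  have sH: "spanning_forest E H" using H by (rule MF_sf)
  define T where "T = wcomp Nv H y"
  have Tc: "closed T H" unfolding T_def by (rule wcomp_closed[OF sH])
  have DD': "DD (insert H M) = DD M \<inter> T" unfolding DD_def T_def wcomp_def by auto
  define P' where "P' = replace_at P H (-T)"
  have P': "P' \<in> MF" unfolding P'_def by (rule exch[OF P(1) H closed_compl[OF Tc]])
  have P'arc: "(a,b) \<in> P' \<longleftrightarrow> (a \<notin> T \<and> (a,b) \<in> H) \<or> (a \<in> T \<and> (a,b) \<in> P)" for a b
    unfolding P'_def replace_at_def arcs_from_def by auto
  have 1: "\<forall>(a,b)\<in>P'. a \<in> DD (insert H M) \<longrightarrow> (a,b) \<in> F"
  proof clarify
    fix a b assume "(a,b) \<in> P'" "a \<in> DD (insert H M)"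
    thus "(a,b) \<in> F" using P(2) unfolding DD' using P'arc[of a b] by auto
  qed
  have 2: "\<forall>(a,b)\<in>P'. a \<notin> DD (insert H M) \<longrightarrow> b \<notin> DD (insert H M)"
  proof clarify
    fix a b assume ab: "(a,b) \<in> P'" and a: "a \<notin> DD (insert H M)" and b: "b \<in> DD (insert H M)"
    show False
    proof (cases "a \<in> T")
      case False
      hence "(a,b) \<in> H" using ab P'arc by auto
      hence "b \<notin> T" using Tc False unfolding closed_def by auto
      thus False using b DD' by auto
    next
      case True
      hence "(a,b) \<in> P" using ab P'arc by auto
      moreover have "a \<notin> DD M" using a True DD' by auto
      ultimately have "b \<notin> DD M" using P(3) by auto
      thus False using b DD' by auto
    qed
  qed
  show ?case using P' 1 2 by blast
qed

lemma DD_U: "DD MF = U"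
  using U_in D_sub U_Nv unfolding DD_def by blast

lemma clean: assumes F: "F \<in> MF"
  shows "\<exists>P\<in>MF. arcs_from P U = arcs_from F U \<and> (\<forall>(a,b)\<in>P. a \<notin> U \<longrightarrow> b \<notin> U)"
proof -
  obtain P where P: "P \<in> MF" "\<forall>(a,b)\<in>P. a \<in> U \<longrightarrow> (a,b) \<in> F" "\<forall>(a,b)\<in>P. a \<notin> U \<longrightarrow> b \<notin> U"
    using iter[OF MF_fin subset_refl F] unfolding DD_U by blast
  have "arcs_from P U = arcs_from F U"
  proof
    show "arcs_from P U \<subseteq> arcs_from F U" using P(2) unfolding arcs_from_def by auto
    show "arcs_from F U \<subseteq> arcs_from P U"
    proof
      fix e assume "e \<in> arcs_from F U"
      then obtain a b where e: "e = (a,b)" "(a,b) \<in> F" "a \<in> U" unfolding arcs_from_def by (cases e) auto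
      then obtain b' where "(a,b') \<in> P" using U_dom[OF P(1)] by force
      moreover hence "(a,b') \<in> F" using P(2) e by auto
      ultimately show "e \<in> arcs_from P U" using e sf_props(3)[OF MF_sf[OF F]] unfolding functional_def arcs_from_def by auto
    qed
  qed
  thus ?thesis using P by blast
qed

end
end



theorem theorem3:
  fixes Nv :: "'a set" and E :: "('a \<times> 'a) set" and v :: "'a \<Rightarrow> 'a \<Rightarrow> real"
    and k :: nat and F :: "('a \<times> 'a) set" and U X :: "'a set" and x :: 'a
  assumes dg: "is_digraph Nv E"
    and tree: "forests_k Nv E 1 \<noteq> {}"
    and k: "1 \<le> k" "k \<le> card Nv - 1"
    and gap: "phi Nv E v (k - 1) - phi Nv E v k > phi Nv E v k - phi Nv E v (k + 1)"
    and F: "F \<in> min_forests Nv E v k"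
    and U: "unlabeled_atom Nv E v k U"
    and x: "x \<in> U"
    and X: "X = wcomp U (F \<inter> U \<times> U) x"
  shows
    "(\<exists>H \<in> min_forests Nv E v k. arcs_from H X = arcs_from F X \<and> \<not> enters H X)
     \<and> (\<forall>G \<in> min_forests Nv E v k.
          Ups v G X = Ups v F X
          \<and> (\<not> enters F X \<longrightarrow> spanning_forest E (replace_at F G X))
          \<and> (spanning_forest E (replace_at F G X) \<longrightarrow> replace_at F G X \<in> min_forests Nv E v k))
     \<and> (\<forall>G. spanning_forest E G \<and> X \<subseteq> fst ` G \<longrightarrow>
          Ups v G X \<ge> Ups v F X
          \<and> (Ups v G X = Ups v F X \<longrightarrow>
               (\<exists>F' \<in> min_forests Nv E v k. arcs_from F' X = arcs_from G X)))"
proof -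
  interpret ctx Nv E v k using dg k gap by unfold_locales auto
  have sF: "spanning_forest E F" using F by (rule MF_sf)
  have XU: "X \<subseteq> U" using X unfolding wcomp_def by auto
  have Xcomp: "a \<in> X \<longleftrightarrow> b \<in> X" if "(a,b) \<in> F" "a \<in> U" "b \<in> U" for a b
  proof -
    have 1: "(a,b) \<in> (F \<inter> U \<times> U) \<union> (F \<inter> U \<times> U)\<inverse>" "(b,a) \<in> (F \<inter> U \<times> U) \<union> (F \<inter> U \<times> U)\<inverse>"
      using that by auto
    show ?thesis
    proof
      assume "a \<in> X"
      hence "(x,a) \<in> ((F \<inter> U \<times> U) \<union> (F \<inter> U \<times> U)\<inverse>)\<^sup>*" unfolding X wcomp_def by simp
      hence "(x,b) \<in> ((F \<inter> U \<times> U) \<union> (F \<inter> U \<times> U)\<inverse>)\<^sup>*" using 1(1) by (rule rtrancl_into_rtrancl)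
      thus "b \<in> X" unfolding X wcomp_def using that(3) by simp
    next
      assume "b \<in> X"
      hence "(x,b) \<in> ((F \<inter> U \<times> U) \<union> (F \<inter> U \<times> U)\<inverse>)\<^sup>*" unfolding X wcomp_def by simp
      hence "(x,a) \<in> ((F \<inter> U \<times> U) \<union> (F \<inter> U \<times> U)\<inverse>)\<^sup>*" using 1(2) by (rule rtrancl_into_rtrancl)
      thus "a \<in> X" unfolding X wcomp_def using that(2) by simp
    qed
  qed
  have Xdom: "X \<subseteq> fst ` H" if "H \<in> MF" for H using U_dom[OF U x that] XU by blast
  obtain P where P: "P \<in> MF" "arcs_from P U = arcs_from F U" "\<forall>(a,b)\<in>P. a \<notin> U \<longrightarrow> b \<notin> U"
    using clean[OF U x F] by blast
  have sP: "spanning_forest E P" using P(1) by (rule MF_sf)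
  have PX: "arcs_from P X = arcs_from F X" using arcs_from_sub[OF P(2) XU] .
  have PinF: "(a,b) \<in> F" if "(a,b) \<in> P" "a \<in> U" for a b
  proof -
    have "(a,b) \<in> arcs_from P U" using that by (simp add: arcs_from_def)
    hence "(a,b) \<in> arcs_from F U" using P(2) by simp
    thus ?thesis by (simp add: arcs_from_def)
  qed
  have noent: "\<forall>(a,b)\<in>P. a \<notin> X \<longrightarrow> b \<notin> X"
  proof clarify
    fix a b assume ab: "(a,b) \<in> P" "a \<notin> X" "b \<in> X"
    show False
    proof (cases "a \<in> U")
      case True
      thus False using Xcomp[OF PinF[OF ab(1) True] True] ab XU by auto
    next
      case False thus False using P(3) ab XU by auto
    qed
  qed
  have part3: "Ups v G X \<ge> Ups v F X \<and> (Ups v G X = Ups v F X \<longrightarrow>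
               (\<exists>F' \<in> MF. arcs_from F' X = arcs_from G X))"
    if G: "spanning_forest E G" "X \<subseteq> fst ` G" for G
  proof -
    define Q where "Q = replace_at P G X"
    have sQ: "spanning_forest E Q" unfolding Q_def
      by (rule sf_repl[OF sP G(1) acyc_a[OF sf_props(2)[OF sP] sf_props(2)[OF G(1)] noent]])
    have rQ: "roots Nv Q = roots Nv P" unfolding Q_def by (rule roots_repl_same[OF Xdom[OF P(1)] G(2)])
    have cQ: "card (roots Nv Q) = k" using rQ MF_card[OF P(1)] by simp
    have wQ: "Ups_all v Q = Ups v G X + Out v P X" unfolding Q_def
      by (rule Ups_repl[OF sf_fin[OF sP] sf_fin[OF G(1)]])
    have wP: "Ups_all v P = Ups v P X + Out v P X" by (rule Ups_split[OF sf_fin[OF sP]])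
    have UP: "Ups v P X = Ups v F X" by (rule Ups_arcs[OF PX])
    have ge: "Ups_all v P \<le> Ups_all v Q" by (rule MF_ge[OF P(1) sQ cQ])
    have "Ups v G X \<ge> Ups v F X" using ge wQ wP UP by simp
    moreover have "\<exists>F' \<in> MF. arcs_from F' X = arcs_from G X" if eq: "Ups v G X = Ups v F X"
    proof
      show "Q \<in> MF" by (rule MF_I[OF P(1) sQ cQ]) (use wQ wP UP eq in simp)
      show "arcs_from Q X = arcs_from G X" unfolding Q_def replace_at_def arcs_from_def by auto
    qed
    ultimately show ?thesis by blast
  qed
  have part2: "Ups v G X = Ups v F X
          \<and> (\<not> enters F X \<longrightarrow> spanning_forest E (replace_at F G X))
          \<and> (spanning_forest E (replace_at F G X) \<longrightarrow> replace_at F G X \<in> MF)" if G: "G \<in> MF" for G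
  proof -
    have sG: "spanning_forest E G" using G by (rule MF_sf)
    obtain P2 where P2: "P2 \<in> MF" "arcs_from P2 U = arcs_from G U" "\<forall>(a,b)\<in>P2. a \<notin> U \<longrightarrow> b \<notin> U"
      using clean[OF U x G] by blast
    have sP2: "spanning_forest E P2" using P2(1) by (rule MF_sf)
    define R where "R = replace_at P2 P X"
    have Rarc: "(a,b) \<in> R \<longleftrightarrow> (a \<in> X \<and> (a,b) \<in> P) \<or> (a \<notin> X \<and> (a,b) \<in> P2)" for a b
      unfolding R_def replace_at_def arcs_from_def by auto
    have aP: "acyclic P" and aP2: "acyclic P2" using sf_props(2) sP sP2 by auto
    have acR: "acyclic R"
    proof (rule acyc_split[where C="U - X"])
      show "acyclic (R \<inter> (U - X) \<times> (U - X))" by (rule acyclic_subset[OF aP2]) (auto simp: Rarc)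
      show "\<forall>(a,b)\<in>R. a \<notin> U - X \<longrightarrow> b \<notin> U - X"
      proof clarify
        fix a b assume ab: "(a,b) \<in> R" "a \<notin> U - X" "b \<in> U" "b \<notin> X"
        show False
        proof (cases "a \<in> X")
          case True
          hence "(a,b) \<in> P" using ab Rarc by auto
          hence "(a,b) \<in> F" using PinF True XU by auto
          thus False using Xcomp[of a b] True XU ab by auto
        next
          case False
          hence "(a,b) \<in> P2" "a \<notin> U" using ab Rarc by auto
          thus False using P2(3) ab by auto
        qed
      qed
      show "acyclic (R \<inter> (- (U - X)) \<times> (- (U - X)))"
      proof (rule acyc_split[where C="X"])
        show "acyclic ((R \<inter> (- (U - X)) \<times> (- (U - X))) \<inter> X \<times> X)" by (rule acyclic_subset[OF aP]) (auto simp: Rarc)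
        show "acyclic ((R \<inter> (- (U - X)) \<times> (- (U - X))) \<inter> (- X) \<times> (- X))" by (rule acyclic_subset[OF aP2]) (auto simp: Rarc)
        show "\<forall>(a,b)\<in>R \<inter> (- (U - X)) \<times> (- (U - X)). a \<notin> X \<longrightarrow> b \<notin> X"
        proof -
          have "b \<notin> X" if ab: "(a,b) \<in> R" "a \<notin> U - X" "a \<notin> X" for a b
          proof -
            have "(a,b) \<in> P2" "a \<notin> U" using ab Rarc by auto
            thus ?thesis using P2(3) XU by auto
          qed
          thus ?thesis by blast
        qed
      qed
    qed
    have sR: "spanning_forest E R" unfolding R_def by (rule sf_repl[OF sP2 sP acR[unfolded R_def]])
    have rR: "roots Nv R = roots Nv P2" unfolding R_def by (rule roots_repl_same[OF Xdom[OF P2(1)] Xdom[OF P(1)]])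
    have cR: "card (roots Nv R) = k" using rR MF_card[OF P2(1)] by simp
    have wR: "Ups_all v R = Ups v P X + Out v P2 X" unfolding R_def
      by (rule Ups_repl[OF sf_fin[OF sP2] sf_fin[OF sP]])
    have wP2: "Ups_all v P2 = Ups v P2 X + Out v P2 X" by (rule Ups_split[OF sf_fin[OF sP2]])
    have UP: "Ups v P X = Ups v F X" by (rule Ups_arcs[OF PX])
    have UP2: "Ups v P2 X = Ups v G X" by (rule Ups_arcs[OF arcs_from_sub[OF P2(2) XU]])
    have ge: "Ups_all v P2 \<le> Ups_all v R" by (rule MF_ge[OF P2(1) sR cR])
    have le: "Ups v G X \<le> Ups v F X" using ge wR wP2 UP UP2 by simp
    have eq: "Ups v G X = Ups v F X" using le part3[OF sG Xdom[OF G]] by simp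
    have b: "spanning_forest E (replace_at F G X)" if ne: "\<not> enters F X"
    proof (rule sf_repl[OF sF sG], rule acyc_a[OF sf_props(2)[OF sF] sf_props(2)[OF sG]])
      show "\<forall>(a,b)\<in>F. a \<notin> X \<longrightarrow> b \<notin> X" using ne unfolding enters_def by auto
    qed
    have c: "replace_at F G X \<in> MF" if s: "spanning_forest E (replace_at F G X)"
    proof (rule MF_I[OF F s])
      show "card (roots Nv (replace_at F G X)) = k"
        using roots_repl_same[OF Xdom[OF F] Xdom[OF G]] MF_card[OF F] by simp
      show "Ups_all v (replace_at F G X) \<le> Ups_all v F"
        using Ups_repl[OF sf_fin[OF sF] sf_fin[OF sG], of v X] Ups_split[OF sf_fin[OF sF], of v X] eq by simp
    qed
    show ?thesis using eq b c by blast
  qed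
  have part1: "\<exists>H \<in> MF. arcs_from H X = arcs_from F X \<and> \<not> enters H X"
  proof (rule bexI[of _ P])
    show "arcs_from P X = arcs_from F X \<and> \<not> enters P X" using PX noent unfolding enters_def by auto
  qed (rule P(1))
  have p2: "\<forall>G\<in>MF. Ups v G X = Ups v F X
          \<and> (\<not> enters F X \<longrightarrow> spanning_forest E (replace_at F G X))
          \<and> (spanning_forest E (replace_at F G X) \<longrightarrow> replace_at F G X \<in> MF)"
  proof
    fix G assume "G \<in> MF" thus "Ups v G X = Ups v F X
          \<and> (\<not> enters F X \<longrightarrow> spanning_forest E (replace_at F G X))
          \<and> (spanning_forest E (replace_at F G X) \<longrightarrow> replace_at F G X \<in> MF)" by (rule part2)
  qed
  have p3: "\<forall>G. spanning_forest E G \<and> X \<subseteq> fst ` G \<longrightarrow>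
          Ups v G X \<ge> Ups v F X
          \<and> (Ups v G X = Ups v F X \<longrightarrow>
               (\<exists>F' \<in> MF. arcs_from F' X = arcs_from G X))"
  proof (intro allI impI)
    fix G assume "spanning_forest E G \<and> X \<subseteq> fst ` G"
    thus "Ups v G X \<ge> Ups v F X
          \<and> (Ups v G X = Ups v F X \<longrightarrow>
               (\<exists>F' \<in> MF. arcs_from F' X = arcs_from G X))" using part3 by blast
  qed
  show ?thesis using part1 p2 p3 by (intro conjI)
qed


end
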